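(* Let $T>0$, $\mu>0$, $U>0$ with $UJ(T)<\mu/2$. Then every minimizer $(\gamma,\alpha,\rho_0)$ of $\mathcal{F}$ over $\mathcal{D}$ has $\rho_0\neq0$.
   Context: Let $\mathbb{T}^3=[-\pi,\pi]^3$ with periodic identification and normalized Haar measure $dp$. Let $\varepsilon(p)=4\sum_{k=1}^3\sin^2(p_k/2)$. $\mathcal{D}=\{(\gamma,\alpha,\rho_0): \gamma\in L^1(\mathbb{T}^3),\ \gamma\ge0,\ \alpha^2\le\gamma(1+\gamma)\text{ a.e.},\ \rho_0\ge0\}$. With $\beta=\sqrt{(\tfrac12+\gamma)^2-\alpha^2}$, $S(\gamma,\alpha)=\int\big[(\beta+\tfrac12)\ln(\beta+\tfrac12)-(\beta-\tfrac12)\ln(\beta-\tfrac12)\big]dp$, and $\mathcal{F}(\gamma,\alpha,\rho_0)=\int(\varepsilon-\mu)\gamma\,dp-\mu\rho_0-TS(\gamma,\alpha)+\frac U2(\int\alpha)^2+U(\int\gamma)^2+U\rho_0\int\alpha+2U\rho_0\int\gamma+\frac U2\rho_0^2$ (integrals over $\mathbb{T}^3$). $J(T)=\int_{\mathbb{T}^3}(e^{\varepsilon(p)/T}-1)^{-1}dp$. *)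

theory Defs
  imports "HOL-Analysis.Analysis"
begin

type_synonym pt = "real^3"

text \<open>The torus [-pi,pi]^3 (boundary has measure zero, so periodic identification is irrelevant).\<close>
definition Tbox :: "pt set" where
  "Tbox = cbox (\<chi> i. - pi) (\<chi> i. pi)"

text \<open>Integral against normalized Haar measure dp = dp_Lebesgue / (2 pi)^3.\<close>
definition tint :: "(pt \<Rightarrow> real) \<Rightarrow> real" where
  "tint f = (LINT p : Tbox | lborel. f p) / (2 * pi) ^ 3"

definition eps :: "pt \<Rightarrow> real" where
  "eps p = 4 * (\<Sum>k\<in>UNIV. (sin (p $ k / 2))\<^sup>2)"

definition betaf :: "real \<Rightarrow> real \<Rightarrow> real" where
  "betaf g a = sqrt ((1/2 + g)\<^sup>2 - a\<^sup>2)"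

text \<open>Note: ln 0 = 0 in Isabelle, so (b - 1/2) ln (b - 1/2) = 0 at b = 1/2 as intended.\<close>
definition sfun :: "real \<Rightarrow> real" where
  "sfun b = (b + 1/2) * ln (b + 1/2) - (b - 1/2) * ln (b - 1/2)"

definition Sent :: "(pt \<Rightarrow> real) \<Rightarrow> (pt \<Rightarrow> real) \<Rightarrow> real" where
  "Sent \<gamma> \<alpha> = tint (\<lambda>p. sfun (betaf (\<gamma> p) (\<alpha> p)))"

definition Dom :: "((pt \<Rightarrow> real) \<times> (pt \<Rightarrow> real) \<times> real) set" where
  "Dom = {(\<gamma>, \<alpha>, \<rho>0).
      \<gamma> \<in> borel_measurable lborel \<and> \<alpha> \<in> borel_measurable lborel \<and>
      set_integrable lborel Tbox \<gamma> \<and>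
      (AE p \<in> Tbox in lborel. 0 \<le> \<gamma> p) \<and>
      (AE p \<in> Tbox in lborel. (\<alpha> p)\<^sup>2 \<le> \<gamma> p * (1 + \<gamma> p)) \<and>
      0 \<le> \<rho>0}"

definition Ffun :: "real \<Rightarrow> real \<Rightarrow> real \<Rightarrow> (pt \<Rightarrow> real) \<Rightarrow> (pt \<Rightarrow> real) \<Rightarrow> real \<Rightarrow> real" where
  "Ffun T \<mu> U \<gamma> \<alpha> \<rho>0 =
     tint (\<lambda>p. (eps p - \<mu>) * \<gamma> p) - \<mu> * \<rho>0 - T * Sent \<gamma> \<alpha>
     + U / 2 * (tint \<alpha>)\<^sup>2 + U * (tint \<gamma>)\<^sup>2 + U * \<rho>0 * tint \<alpha>
     + 2 * U * \<rho>0 * tint \<gamma> + U / 2 * \<rho>0\<^sup>2"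

definition Jfun :: "real \<Rightarrow> real" where
  "Jfun T = tint (\<lambda>p. 1 / (exp (eps p / T) - 1))"

end

theory Submission
  imports Defs
begin

lemma sin_half_lower:
  fixes x :: real assumes "\<bar>x\<bar> \<le> pi"
  shows "x\<^sup>2 / 36 \<le> (sin (x/2))\<^sup>2"
proof -
  define y where "y = \<bar>x\<bar>/2"
  have y0: "0 \<le> y" and y2: "y \<le> 2" using assms pi_less_4 unfolding y_def by auto
  have "\<bar>sin y - (\<Sum>m<3. sin_coeff m * y ^ m)\<bar> \<le> inverse (fact 3) * \<bar>y\<bar> ^ 3"
    by (rule Maclaurin_sin_bound)
  moreover have "(\<Sum>m<3. sin_coeff m * y ^ m) = y"
    by (simp add: eval_nat_numeral sin_coeff_def)
  ultimately have "\<bar>sin y - y\<bar> \<le> y^3/6" using y0 by (simp add: eval_nat_numeral divide_simps)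
  moreover have "y^3 \<le> 4 * y"
  proof -
    have "y^2 \<le> 2^2" using y0 y2 by (intro power_mono) auto
    then have "y * y^2 \<le> y * 4" using y0 by (intro mult_left_mono) auto
    then show ?thesis by (simp add: power3_eq_cube power2_eq_square mult.commute)
  qed
  ultimately have s: "y/3 \<le> sin y" by linarith
  have "(sin (x/2))\<^sup>2 = (sin y)\<^sup>2"
    unfolding y_def by (cases "x \<ge> 0") (auto simp: power2_eq_square)
  moreover have "(y/3)^2 \<le> (sin y)^2" using s y0 by (intro power_mono) auto
  ultimately show ?thesis unfolding y_def by (simp add: power2_eq_square)
qed

lemma Basis_vec3: "(Basis :: pt set) = range (\<lambda>i. axis i 1)"
  by (auto simp: Basis_vec_def)

lemma prod_Basis_pt: "(\<Prod>b\<in>(Basis::pt set). f (p \<bullet> b)) = (\<Prod>i\<in>UNIV. f (p $ i))"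
proof -
  have "inj (\<lambda>i::3. axis i (1::real))" by (auto simp: inj_def axis_eq_axis)
  then show ?thesis unfolding Basis_vec3
    by (subst prod.reindex) (auto simp: inner_axis)
qed

lemma powr_int_1d:
  "(\<lambda>x::real. \<bar>x\<bar> powr (-2/3)) integrable_on {-pi..pi}"
proof -
  have a: "(\<lambda>x::real. x powr (-2/3)) integrable_on {0..pi}"
    by (rule integrable_on_powr_from_0) auto
  have b: "(\<lambda>x::real. \<bar>x\<bar> powr (-2/3)) integrable_on {0..pi}"
    by (rule integrable_eq[OF a]) auto
  have "(\<lambda>x::real. \<bar>-x\<bar> powr (-2/3)) integrable_on {-pi..-0}"
    using Henstock_Kurzweil_Integration.integrable_reflect_real[where f="\<lambda>x::real. \<bar>x\<bar> powr (-2/3)" and b=pi and a=0] b by simp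
  then have c: "(\<lambda>x::real. \<bar>x\<bar> powr (-2/3)) integrable_on {-pi..0}" by simp
  show ?thesis by (rule Henstock_Kurzweil_Integration.integrable_combine[OF _ _ c b]) auto
qed

definition hh :: "real \<Rightarrow> ennreal" where
  "hh x = (if x = 0 then top else ennreal (\<bar>x\<bar> powr (-2/3))) * indicator {-pi..pi} x"

lemma hh_meas[measurable]: "hh \<in> borel_measurable borel"
  unfolding hh_def by measurable

lemma hh_finite: "(\<integral>\<^sup>+x. hh x \<partial>lborel) < top"
proof -
  have "(\<integral>\<^sup>+x. hh x \<partial>lborel) = (\<integral>\<^sup>+x. ennreal (\<bar>x\<bar> powr (-2/3)) * indicator {-pi..pi} x \<partial>lborel)"
    by (rule nn_integral_cong_AE) (use AE_lborel_singleton[of "0::real"] in \<open>auto simp: hh_def\<close>)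
  also have "\<dots> = ennreal (integral {-pi..pi} (\<lambda>x::real. \<bar>x\<bar> powr (-2/3)))"
    by (rule nn_integral_has_integral_lebesgue') (use integrable_integral[OF powr_int_1d] in auto)
  finally show ?thesis by simp
qed

lemma inv_anti: "0 < (B::real) \<Longrightarrow> B \<le> A \<Longrightarrow> 1 / A \<le> 1 / B"
  by (simp add: frac_le)

lemma inv_sum_le_prod_powr:
  fixes a :: "3 \<Rightarrow> real"
  assumes pos: "\<And>i. a i > 0"
  shows "1 / (\<Sum>i\<in>UNIV. a i) \<le> (\<Prod>i\<in>UNIV. a i powr (-1/3))"
proof -
  define S where "S = (\<Sum>i\<in>UNIV. a i)"
  have S0: "S > 0" unfolding S_def using pos by (intro sum_pos) auto
  have aS: "a i \<le> S" for i unfolding S_def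
    using pos by (intro member_le_sum) (auto intro: less_imp_le)
  have "(\<Prod>i\<in>UNIV. a i powr (1/3)) \<le> (\<Prod>i\<in>(UNIV::3 set). S powr (1/3))"
  proof (intro prod_mono conjI)
    fix i
    show "0 \<le> a i powr (1/3)" by simp
    show "a i powr (1/3) \<le> S powr (1/3)" using pos[of i] aS[of i] by (intro powr_mono2) auto
  qed
  also have "\<dots> = (S powr (1/3)) ^ 3" by simp
  also have "\<dots> = S" using S0 by (simp add: power3_eq_cube powr_add[symmetric])
  finally have 1: "(\<Prod>i\<in>UNIV. a i powr (1/3)) \<le> S" .
  have P0: "(\<Prod>i\<in>UNIV. a i powr (1/3)) > 0"
  proof (intro prod_pos)
    fix i show "0 < a i powr (1/3)" using pos[of i] by simp
  qed
  have "1 / S \<le> 1 / (\<Prod>i\<in>UNIV. a i powr (1/3))"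
    using 1 P0 by (intro divide_left_mono) auto
  also have "\<dots> = (\<Prod>i\<in>UNIV. a i powr (-1/3))"
    using pos by (simp add: prod_dividef powr_minus_divide)
  finally show ?thesis unfolding S_def .
qed

lemma eps_lower:
  assumes "p \<in> Tbox"
  shows "(\<Sum>i\<in>UNIV. (p$i)\<^sup>2) / 9 \<le> eps p"
proof -
  have b: "\<bar>p$i\<bar> \<le> pi" for i 
  proof -
    have "- pi \<le> p$i" "p$i \<le> pi" using assms unfolding Tbox_def mem_box_cart by auto
    then show ?thesis by (simp add: abs_le_iff)
  qed
  have "(\<Sum>i\<in>UNIV. (p$i)\<^sup>2) / 9 = 4 * (\<Sum>i\<in>UNIV. (p$i)\<^sup>2 / 36)"
    by (simp add: sum_divide_distrib[symmetric])
  also have "\<dots> \<le> eps p" unfolding eps_def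
    using sin_half_lower[OF b] by (intro mult_left_mono sum_mono) auto
  finally show ?thesis .
qed

lemma eps_nonneg: "0 \<le> eps p"
  unfolding eps_def by (intro mult_nonneg_nonneg sum_nonneg) auto

lemma Bf_nonneg: "T > 0 \<Longrightarrow> 0 \<le> 1 / (exp (eps p / T) - 1)"
  using eps_nonneg[of p] by (simp add: divide_nonneg_pos)

lemma Bf_bound:
  assumes T: "T > 0" and p: "p \<in> Tbox"
  shows "ennreal (1 / (exp (eps p / T) - 1)) \<le> ennreal (9 * T) * (\<Prod>i\<in>UNIV. hh (p$i))"
proof (cases "\<exists>i. p$i = 0")
  case True
  have b: "p$i \<in> {-pi..pi}" for i using p unfolding Tbox_def mem_box_cart by auto
  have nz: "hh (p$i) \<noteq> 0" for i using b[of i] by (auto simp: hh_def)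
  have "(\<Prod>i\<in>UNIV. hh (p$i)) = top"
    using True b nz by (subst ennreal_prod_eq_top) (auto simp: hh_def)
  then show ?thesis using T by (simp add: ennreal_mult_top)
next
  case False
  have b: "p$i \<in> {-pi..pi}" for i using p unfolding Tbox_def mem_box_cart by auto
  define Q where "Q = (\<Sum>i\<in>UNIV. (p$i)\<^sup>2)"
  have Q0: "Q > 0" unfolding Q_def using False by (intro sum_pos) auto
  have e: "Q / 9 \<le> eps p" using eps_lower[OF p] unfolding Q_def .
  have epos: "eps p > 0" using Q0 e by linarith
  have "eps p / T \<le> exp (eps p / T) - 1" using exp_ge_add_one_self[of "eps p / T"] by linarith
  moreover have "eps p / T > 0" using epos T by simp
  ultimately have "1 / (exp (eps p / T) - 1) \<le> 1 / (eps p / T)"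
    by (intro inv_anti) auto
  also have "\<dots> = T / eps p" by simp
  also have "\<dots> \<le> T / (Q/9)" using e Q0 T by (intro divide_left_mono) auto
  also have "\<dots> = 9 * T * (1 / Q)" by simp
  also have "\<dots> \<le> 9 * T * (\<Prod>i\<in>UNIV. ((p$i)\<^sup>2) powr (-1/3))"
    unfolding Q_def using T False by (intro mult_left_mono inv_sum_le_prod_powr) auto
  also have "(\<Prod>i\<in>UNIV. ((p$i)\<^sup>2) powr (-1/3)) = (\<Prod>i\<in>UNIV. \<bar>p$i\<bar> powr (-2/3))"
  proof (intro prod.cong refl)
    fix i
    have "\<bar>p$i\<bar> powr 2 = \<bar>p$i\<bar> ^ 2" using False by (subst powr_numeral) auto
    then have "(p$i)\<^sup>2 = \<bar>p$i\<bar> powr 2" by simp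
    then have "((p$i)\<^sup>2) powr (-1/3) = (\<bar>p$i\<bar> powr 2) powr (-1/3)" by simp
    also have "\<dots> = \<bar>p$i\<bar> powr (-2/3)" by (subst powr_powr) simp
    finally show "((p$i)\<^sup>2) powr (-1/3) = \<bar>p$i\<bar> powr (-2/3)" .
  qed
  finally have 1: "1 / (exp (eps p / T) - 1) \<le> 9 * T * (\<Prod>i\<in>UNIV. \<bar>p$i\<bar> powr (-2/3))" .
  have "(\<Prod>i\<in>UNIV. hh (p$i)) = (\<Prod>i\<in>UNIV. ennreal (\<bar>p$i\<bar> powr (-2/3)))"
    using False b by (intro prod.cong refl) (auto simp: hh_def)
  also have "\<dots> = ennreal (\<Prod>i\<in>UNIV. \<bar>p$i\<bar> powr (-2/3))"
    by (rule prod_ennreal) auto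
  finally show ?thesis using 1 T
    by (simp add: ennreal_mult[symmetric] prod_nonneg ennreal_leI)
qed

lemma eps_cont: "continuous_on UNIV eps"
  unfolding eps_def by (intro continuous_intros) auto

lemma eps_meas[measurable]: "eps \<in> borel_measurable borel"
  by (rule borel_measurable_continuous_onI[OF eps_cont])

lemma Tbox_sets[measurable]: "Tbox \<in> sets borel"
  unfolding Tbox_def by simp

lemma Bf_integrable:
  assumes T: "T > 0"
  shows "set_integrable lborel Tbox (\<lambda>p. 1 / (exp (eps p / T) - 1))"
  unfolding set_integrable_def
proof (rule integrableI_nonneg)
  show "(\<lambda>x. indicator Tbox x *\<^sub>R (1 / (exp (eps x / T) - 1))) \<in> borel_measurable lborel"
    by measurable
  show "AE x in lborel. 0 \<le> indicator Tbox x *\<^sub>R (1 / (exp (eps x / T) - 1))"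
    using Bf_nonneg[OF T] by (auto simp: indicator_def)
  have "(\<integral>\<^sup>+x. ennreal (indicator Tbox x *\<^sub>R (1 / (exp (eps x / T) - 1))) \<partial>lborel)
      \<le> (\<integral>\<^sup>+x. ennreal (9 * T) * (\<Prod>b\<in>(Basis::pt set). hh (x \<bullet> b)) \<partial>(lborel::pt measure))"
  proof (rule nn_integral_mono)
    fix x :: pt
    show "ennreal (indicator Tbox x *\<^sub>R (1 / (exp (eps x / T) - 1))) \<le> ennreal (9 * T) * (\<Prod>b\<in>Basis. hh (x \<bullet> b))"
      using Bf_bound[OF T, of x] by (auto simp: indicator_def prod_Basis_pt)
  qed
  also have "\<dots> = ennreal (9 * T) * (\<integral>\<^sup>+x. (\<Prod>b\<in>(Basis::pt set). hh (x \<bullet> b)) \<partial>(lborel::pt measure))"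
    by (rule nn_integral_cmult) measurable
  also have "\<dots> = ennreal (9 * T) * (\<Prod>b\<in>(Basis::pt set). (\<integral>\<^sup>+x. hh x \<partial>lborel))"
    by (subst nn_integral_lborel_prod) auto
  also have "\<dots> < top"
    using hh_finite by (simp add: ennreal_mult_less_top power_less_top_ennreal)
  finally show "(\<integral>\<^sup>+x. ennreal (indicator Tbox x *\<^sub>R (1 / (exp (eps x / T) - 1))) \<partial>lborel) < \<infinity>"
    by simp
qed

definition sfn :: "real \<Rightarrow> real" where
  "sfn g = (g + 1) * ln (g + 1) - g * ln g"

lemma sfun_sfn: "sfun b = sfn (b - 1/2)"
  unfolding sfun_def sfn_def by (simp add: algebra_simps)

lemma betaf0: "0 \<le> g \<Longrightarrow> betaf g 0 = 1/2 + g"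
  unfolding betaf_def by simp

lemma sfun_betaf0: "0 \<le> g \<Longrightarrow> sfun (betaf g 0) = sfn g"
  by (simp add: betaf0 sfun_sfn)

lemma sfn_nonneg: assumes "0 \<le> g" shows "0 \<le> sfn g"
proof (cases "g = 0")
  case True then show ?thesis by (simp add: sfn_def)
next
  case False
  then have g: "g > 0" using assms by simp
  have "ln g \<le> ln (g+1)" using g by simp
  moreover have "0 \<le> ln (g+1)" using g by simp
  ultimately have "g * ln g \<le> (g+1) * ln (g+1)"
  proof -
    have "g * ln g \<le> g * ln (g+1)" using g \<open>ln g \<le> ln (g+1)\<close> by (intro mult_left_mono) auto
    also have "\<dots> \<le> (g+1) * ln (g+1)" using \<open>0 \<le> ln (g+1)\<close> by (intro mult_right_mono) auto
    finally show ?thesis .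
  qed
  then show ?thesis by (simp add: sfn_def)
qed

lemma sfn_le: assumes "0 \<le> g" shows "sfn g \<le> g + 1"
proof (cases "g = 0")
  case True then show ?thesis by (simp add: sfn_def)
next
  case False
  then have g: "g > 0" using assms by simp
  have e: "sfn g = ln (g+1) + g * (ln (g+1) - ln g)" by (simp add: sfn_def algebra_simps)
  have 1: "ln (g+1) \<le> g" using ln_le_minus_one[of "g+1"] g by simp
  have "ln (g+1) - ln g = ln ((g+1)/g)" using g by (simp add: ln_div)
  also have "\<dots> \<le> (g+1)/g - 1" using g by (intro ln_le_minus_one) simp
  also have "\<dots> = 1/g" using g by (simp add: field_simps)
  finally have "g * (ln (g+1) - ln g) \<le> g * (1/g)" using g by (intro mult_left_mono) auto
  then have "g * (ln (g+1) - ln g) \<le> 1" using g by simp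
  then show ?thesis using e 1 by linarith
qed

lemma sfn_deriv: assumes t: "0 < t" shows "(sfn has_real_derivative (ln (t+1) - ln t)) (at t)"
  unfolding sfn_def[abs_def] using t
  by (auto intro!: derivative_eq_intros simp: field_simps)

lemma sfn_cont: "0 < x \<Longrightarrow> continuous_on {x..y} sfn"
  unfolding sfn_def by (intro continuous_intros) auto

lemma sfn_mono: assumes "0 \<le> x" "x \<le> y" shows "sfn x \<le> sfn y"
proof (cases "x = 0")
  case True then show ?thesis using sfn_nonneg[of y] assms by (simp add: sfn_def)
next
  case False
  then have x: "x > 0" using assms by simp
  show ?thesis
  proof (rule DERIV_nonneg_imp_increasing_open[OF assms(2) _ sfn_cont[OF x]])
    fix t assume "x < t" "t < y"
    then have t: "t > 0" using x by simp
    show "\<exists>d. (sfn has_real_derivative d) (at t) \<and> 0 \<le> d"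
      using sfn_deriv[OF t] t by auto
  qed
qed

lemma sfun_betaf_bounds:
  assumes "0 \<le> g" "a\<^sup>2 \<le> g * (1 + g)"
  shows "0 \<le> sfun (betaf g a) \<and> sfun (betaf g a) \<le> sfn g"
proof -
  have "(1/2 + g)\<^sup>2 - a\<^sup>2 \<ge> (1/2)\<^sup>2" using assms by (simp add: power2_eq_square algebra_simps)
  then have "sqrt ((1/2)\<^sup>2) \<le> betaf g a" unfolding betaf_def by (rule real_sqrt_le_mono)
  then have lo: "betaf g a \<ge> 1/2" by simp
  have "(1/2 + g)\<^sup>2 - a\<^sup>2 \<le> (1/2 + g)\<^sup>2" by simp
  then have "betaf g a \<le> sqrt ((1/2 + g)\<^sup>2)" unfolding betaf_def by (rule real_sqrt_le_mono)
  then have hi: "betaf g a \<le> 1/2 + g" using assms(1) by simp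
  have "sfun (betaf g a) = sfn (betaf g a - 1/2)" by (rule sfun_sfn)
  moreover have "0 \<le> sfn (betaf g a - 1/2)" using lo by (intro sfn_nonneg) simp
  moreover have "sfn (betaf g a - 1/2) \<le> sfn g" using lo hi by (intro sfn_mono) auto
  ultimately show ?thesis by simp
qed

lemma key_pointwise:
  assumes e: "e > 0" and T: "T > 0" and g: "0 \<le> g"
  defines "B \<equiv> 1 / (exp (e / T) - 1)"
  shows "e * min g B - T * sfn (min g B) \<le> e * g - T * sfn g"
proof (cases "g \<le> B")
  case True then show ?thesis by simp
next
  case False
  have ex: "exp (e/T) > 1" using e T by simp
  then have B0: "B > 0" unfolding B_def by simp
  have mB: "min g B = B" using False by simp
  have "e * B - T * sfn B \<le> e * g - T * sfn g"
  proof (rule DERIV_nonneg_imp_increasing_open[of B g "\<lambda>t. e * t - T * sfn t"])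
    show "B \<le> g" using False by simp
    show "continuous_on {B..g} (\<lambda>t. e * t - T * sfn t)"
      using sfn_cont[OF B0, of g] by (intro continuous_intros) auto
    fix t assume t: "B < t" "t < g"
    then have t0: "t > 0" using B0 by simp
    have "ln ((t+1)/t) = ln (t+1) - ln t" using t0 by (simp add: ln_div)
    moreover have "(t+1)/t = 1 + 1/t" using t0 by (simp add: field_simps)
    ultimately have "ln (t+1) - ln t = ln (1 + 1/t)" by simp
    also have "\<dots> \<le> ln (1 + 1/B)"
    proof -
      have "1/t \<le> 1/B" using t B0 by (intro inv_anti) auto
      moreover have "0 < 1 + 1/t" using t0 by (simp add: add_pos_pos)
      ultimately show ?thesis by (intro ln_mono) auto
    qed
    also have "1 + 1/B = exp (e/T)" unfolding B_def using ex by simp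
    also have "ln (exp (e/T)) = e/T" by simp
    finally have "T * (ln (t+1) - ln t) \<le> e" using T by (simp add: field_simps)
    moreover have d1: "((\<lambda>t. e * t) has_real_derivative e) (at t)"
      using DERIV_cmult[OF DERIV_ident, of e t] by simp
    moreover have d2: "((\<lambda>t. T * sfn t) has_real_derivative T * (ln (t+1) - ln t)) (at t)"
      by (rule DERIV_cmult[OF sfn_deriv[OF t0]])
    ultimately show "\<exists>d. ((\<lambda>t. e * t - T * sfn t) has_real_derivative d) (at t) \<and> 0 \<le> d"
      using DERIV_diff[OF d1 d2] by (intro exI[of _ "e - T * (ln (t+1) - ln t)"] conjI) auto
  qed
  then show ?thesis using mB by simp
qed

lemma tint_diff:
  "set_integrable lborel Tbox f \<Longrightarrow> set_integrable lborel Tbox g \<Longrightarrow>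
   tint (\<lambda>p. f p - g p) = tint f - tint g"
  unfolding tint_def by (simp add: set_integral_diff diff_divide_distrib)

lemma tint_cmult: "tint (\<lambda>p. c * f p) = c * tint f"
  unfolding tint_def by simp

lemma tint_zero: "tint (\<lambda>p. 0) = 0"
  unfolding tint_def by (simp add: set_lebesgue_integral_def)

lemma tint_mono_AE:
  "set_integrable lborel Tbox f \<Longrightarrow> set_integrable lborel Tbox g \<Longrightarrow>
   (AE p\<in>Tbox in lborel. f p \<le> g p) \<Longrightarrow> tint f \<le> tint g"
  unfolding tint_def by (intro divide_right_mono set_integral_mono_AE) auto

lemma tint_nonneg:
  assumes "AE p\<in>Tbox in lborel. 0 \<le> f p" shows "0 \<le> tint f"
  unfolding tint_def set_lebesgue_integral_def
proof (intro divide_nonneg_pos integral_nonneg_AE)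
  show "AE x in lborel. 0 \<le> indicator Tbox x *\<^sub>R f x"
    using assms by eventually_elim (auto simp: indicator_def)
qed simp

lemma tint_cong_AE:
  assumes "f \<in> borel_measurable lborel" "g \<in> borel_measurable lborel"
    "AE p\<in>Tbox in lborel. f p = g p"
  shows "tint f = tint g"
  unfolding tint_def using assms by (subst set_lebesgue_integral_cong_AE[of Tbox lborel f g]) auto

lemma Tbox_bounded: "bounded Tbox"
  unfolding Tbox_def by simp

lemma int_const: "set_integrable lborel Tbox (\<lambda>p. c::real)"
  unfolding set_integrable_def
  by (rule integrableI_bounded_set_indicator[where B="\<bar>c\<bar>"])
     (use emeasure_bounded_finite[OF Tbox_bounded] in \<open>auto simp: infinity_ennreal_def\<close>)

lemma eps_le: "eps p \<le> 12"
proof -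
  have "(\<Sum>k\<in>(UNIV::3 set). (sin (p $ k / 2))\<^sup>2) \<le> (\<Sum>k\<in>(UNIV::3 set). 1)"
    by (intro sum_mono) (simp add: abs_square_le_1)
  then show ?thesis unfolding eps_def by simp
qed

lemma eps_zero:
  assumes "p \<in> Tbox" "eps p = 0" shows "p = 0"
proof -
  have "(\<Sum>k\<in>UNIV. (sin (p $ k / 2))\<^sup>2) = 0" using assms(2) unfolding eps_def by simp
  then have z: "(sin (p $ k / 2))\<^sup>2 = 0" for k
    by (subst (asm) sum_nonneg_eq_0_iff) auto
  have "p $ k = 0" for k
  proof -
    have "- pi \<le> p$k" "p$k \<le> pi" using assms(1) unfolding Tbox_def mem_box_cart by auto
    then have "\<bar>p $ k / 2\<bar> < pi" using pi_gt_zero unfolding abs_less_iff by linarith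
    moreover have "sin (p $ k / 2) = 0" using z[of k] by simp
    ultimately show ?thesis using sin_zero_pi_iff by fastforce
  qed
  then show ?thesis by (simp add: vec_eq_iff)
qed

lemma sfn_comp_integrable:
  assumes [measurable]: "g \<in> borel_measurable lborel" and gi: "set_integrable lborel Tbox g"
    and gp: "AE p\<in>Tbox in lborel. 0 \<le> g p"
  shows "set_integrable lborel Tbox (\<lambda>p. sfn (g p))"
proof (rule set_integrable_bound[where f="\<lambda>p. g p + 1"])
  show "set_integrable lborel Tbox (\<lambda>p. g p + 1)"
    using set_integral_add(1)[OF gi int_const[of 1]] by simp
  show "set_borel_measurable lborel Tbox (\<lambda>p. sfn (g p))"
    unfolding set_borel_measurable_def sfn_def by measurable
  show "AE x in lborel. x \<in> Tbox \<longrightarrow> norm (sfn (g x)) \<le> norm (g x + 1)"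
    using gp by eventually_elim (use sfn_nonneg sfn_le in auto)
qed

lemma eps_mult_integrable:
  assumes [measurable]: "g \<in> borel_measurable lborel" and gi: "set_integrable lborel Tbox g"
  shows "set_integrable lborel Tbox (\<lambda>p. eps p * g p)"
proof (rule set_integrable_bound[where f="\<lambda>p. 12 * g p"])
  show "set_integrable lborel Tbox (\<lambda>p. 12 * g p)" using gi by simp
  show "set_borel_measurable lborel Tbox (\<lambda>p. eps p * g p)"
    unfolding set_borel_measurable_def by measurable
  show "AE x in lborel. x \<in> Tbox \<longrightarrow> norm (eps x * g x) \<le> norm (12 * g x)"
  proof (intro AE_I2 impI)
    fix x
    have "\<bar>eps x\<bar> * \<bar>g x\<bar> \<le> 12 * \<bar>g x\<bar>"
      using eps_le[of x] eps_nonneg[of x] by (intro mult_right_mono) auto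
    then show "norm (eps x * g x) \<le> norm (12 * g x)" by (simp add: abs_mult)
  qed
qed

lemma X_integrable:
  assumes [measurable]: "g \<in> borel_measurable lborel" and gi: "set_integrable lborel Tbox g"
    and gp: "AE p\<in>Tbox in lborel. 0 \<le> g p"
  shows "set_integrable lborel Tbox (\<lambda>p. eps p * g p - T * sfn (g p))"
  using eps_mult_integrable[OF assms(1) gi] sfn_comp_integrable[OF assms]
  by (intro set_integral_diff(1)) auto

lemma decomp:
  assumes [measurable]: "g \<in> borel_measurable lborel" and gi: "set_integrable lborel Tbox g"
    and gp: "AE p\<in>Tbox in lborel. 0 \<le> g p"
  shows "tint (\<lambda>p. (eps p - \<mu>) * g p) - T * Sent g (\<lambda>p. 0)
       = tint (\<lambda>p. eps p * g p - T * sfn (g p)) - \<mu> * tint g"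
proof -
  have S: "Sent g (\<lambda>p. 0) = tint (\<lambda>p. sfn (g p))"
    unfolding Sent_def
  proof (rule tint_cong_AE)
    show "(\<lambda>p. sfun (betaf (g p) 0)) \<in> borel_measurable lborel"
      unfolding sfun_def betaf_def by measurable
    show "(\<lambda>p. sfn (g p)) \<in> borel_measurable lborel"
      unfolding sfn_def by measurable
    show "AE p\<in>Tbox in lborel. sfun (betaf (g p) 0) = sfn (g p)"
      using gp by eventually_elim (auto simp: sfun_betaf0)
  qed
  have ei: "set_integrable lborel Tbox (\<lambda>p. eps p * g p)" by (rule eps_mult_integrable[OF assms(1) gi])
  have si: "set_integrable lborel Tbox (\<lambda>p. T * sfn (g p))" using sfn_comp_integrable[OF assms] by simp
  have mi: "set_integrable lborel Tbox (\<lambda>p. \<mu> * g p)" using gi by simp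
  have "tint (\<lambda>p. (eps p - \<mu>) * g p) = tint (\<lambda>p. eps p * g p - \<mu> * g p)"
    by (simp add: algebra_simps)
  also have "\<dots> = tint (\<lambda>p. eps p * g p) - \<mu> * tint g"
    by (subst tint_diff[OF ei mi]) (simp add: tint_cmult)
  finally have 1: "tint (\<lambda>p. (eps p - \<mu>) * g p) = tint (\<lambda>p. eps p * g p) - \<mu> * tint g" .
  have 2: "tint (\<lambda>p. eps p * g p - T * sfn (g p)) = tint (\<lambda>p. eps p * g p) - T * tint (\<lambda>p. sfn (g p))"
    by (subst tint_diff[OF ei si]) (simp add: tint_cmult)
  show ?thesis using 1 2 S by simp
qed

lemma Sent_le:
  assumes [measurable]: "g \<in> borel_measurable lborel" "a \<in> borel_measurable lborel"
    and gi: "set_integrable lborel Tbox g"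
    and gp: "AE p\<in>Tbox in lborel. 0 \<le> g p"
    and ga: "AE p\<in>Tbox in lborel. (a p)\<^sup>2 \<le> g p * (1 + g p)"
  shows "Sent g a \<le> Sent g (\<lambda>p. 0)"
proof -
  have S: "Sent g (\<lambda>p. 0) = tint (\<lambda>p. sfn (g p))"
    unfolding Sent_def
  proof (rule tint_cong_AE)
    show "(\<lambda>p. sfun (betaf (g p) 0)) \<in> borel_measurable lborel"
      unfolding sfun_def betaf_def by measurable
    show "(\<lambda>p. sfn (g p)) \<in> borel_measurable lborel"
      unfolding sfn_def by measurable
    show "AE p\<in>Tbox in lborel. sfun (betaf (g p) 0) = sfn (g p)"
      using gp by eventually_elim (auto simp: sfun_betaf0)
  qed
  have si: "set_integrable lborel Tbox (\<lambda>p. sfn (g p))" by (rule sfn_comp_integrable[OF assms(1) gi gp])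
  have sn: "0 \<le> tint (\<lambda>p. sfn (g p))"
    by (rule tint_nonneg) (use gp in \<open>eventually_elim, auto intro: sfn_nonneg\<close>)
  show ?thesis
  proof (cases "set_integrable lborel Tbox (\<lambda>p. sfun (betaf (g p) (a p)))")
    case True
    have "Sent g a \<le> tint (\<lambda>p. sfn (g p))" unfolding Sent_def
      by (rule tint_mono_AE[OF True si]) (use gp ga in \<open>eventually_elim, use sfun_betaf_bounds in auto\<close>)
    then show ?thesis using S by simp
  next
    case False
    then have "Sent g a = 0" unfolding Sent_def tint_def set_lebesgue_integral_def set_integrable_def
      by (simp add: not_integrable_integral_eq)
    then show ?thesis using S sn by simp
  qed
qed

theorem proposition4p4:
  fixes T \<mu> U :: real and \<gamma> \<alpha> :: "pt \<Rightarrow> real" and \<rho>0 :: real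
  assumes "T > 0" and "\<mu> > 0" and "U > 0"
    and "U * Jfun T < \<mu> / 2"
    and "(\<gamma>, \<alpha>, \<rho>0) \<in> Dom"
    and "\<forall>(\<gamma>', \<alpha>', \<rho>0') \<in> Dom. Ffun T \<mu> U \<gamma> \<alpha> \<rho>0 \<le> Ffun T \<mu> U \<gamma>' \<alpha>' \<rho>0'"
  shows "\<rho>0 \<noteq> 0"
proof
  assume r0: "\<rho>0 = 0"
  note T = assms(1) and U = assms(3)
  have gm[measurable]: "\<gamma> \<in> borel_measurable lborel" and am[measurable]: "\<alpha> \<in> borel_measurable lborel"
    and gi: "set_integrable lborel Tbox \<gamma>"
    and gp: "AE p\<in>Tbox in lborel. 0 \<le> \<gamma> p"
    and ga: "AE p\<in>Tbox in lborel. (\<alpha> p)\<^sup>2 \<le> \<gamma> p * (1 + \<gamma> p)"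
    using assms(5) unfolding Dom_def by auto
  define B where "B = (\<lambda>p. 1 / (exp (eps p / T) - 1))"
  define g' where "g' = (\<lambda>p. if eps p = 0 then \<gamma> p else min (\<gamma> p) (B p))"
  define N where "N = tint \<gamma>"
  define N' where "N' = tint g'"
  define J where "J = Jfun T"
  define \<eta> where "\<eta> = N - N'"
  define \<delta> where "\<delta> = (\<mu> - 2 * U * J) / (2 * U)"
  define \<rho>' where "\<rho>' = \<eta> + \<delta>"
  have B_meas[measurable]: "B \<in> borel_measurable lborel" unfolding B_def by measurable
  have g'_meas[measurable]: "g' \<in> borel_measurable lborel" unfolding g'_def by measurable
  have B0: "0 \<le> B p" for p unfolding B_def using Bf_nonneg[OF T] .
  have g'_abs: "\<bar>g' p\<bar> \<le> \<bar>\<gamma> p\<bar>" for p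
    using B0[of p] unfolding g'_def by auto
  have g'i: "set_integrable lborel Tbox g'"
  proof (rule set_integrable_bound[OF gi])
    show "set_borel_measurable lborel Tbox g'" unfolding set_borel_measurable_def by measurable
    show "AE x in lborel. x \<in> Tbox \<longrightarrow> norm (g' x) \<le> norm (\<gamma> x)"
      using g'_abs by auto
  qed
  have g'p: "AE p\<in>Tbox in lborel. 0 \<le> g' p"
    using gp by eventually_elim (use B0 in \<open>auto simp: g'_def\<close>)
  have g'le: "AE p\<in>Tbox in lborel. g' p \<le> \<gamma> p"
    by (auto simp: g'_def)
  have g'B: "AE p\<in>Tbox in lborel. g' p \<le> B p"
    using AE_lborel_singleton[of "0::pt"]
  proof eventually_elim
    case (elim p)
    show ?case
    proof
      assume "p \<in> Tbox"
      then have "eps p \<noteq> 0" using eps_zero elim by blast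
      then show "g' p \<le> B p" by (simp add: g'_def)
    qed
  qed
  have Bi: "set_integrable lborel Tbox B" unfolding B_def by (rule Bf_integrable[OF T])
  have N'J: "N' \<le> J" unfolding N'_def J_def Jfun_def
    using tint_mono_AE[OF g'i Bi g'B] unfolding B_def .
  have eta_eq: "\<eta> = tint (\<lambda>p. \<gamma> p - g' p)"
    unfolding \<eta>_def N_def N'_def by (rule tint_diff[OF gi g'i, symmetric])
  have eta0: "0 \<le> \<eta>" unfolding eta_eq
    by (rule tint_nonneg) (use g'le in \<open>eventually_elim, auto\<close>)
  have UJ: "U * J < \<mu> / 2" using assms(4) unfolding J_def .
  have d0: "0 < \<delta>" unfolding \<delta>_def using UJ U by (simp add: field_simps)
  have mu_eq: "\<mu> = 2 * U * J + 2 * U * \<delta>" unfolding \<delta>_def using U by (simp add: field_simps)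
  have g'sq: "AE p\<in>Tbox in lborel. ((\<lambda>p. 0::real) p)\<^sup>2 \<le> g' p * (1 + g' p)"
    using g'p by eventually_elim auto
  have dom': "(g', (\<lambda>p. 0), \<rho>') \<in> Dom"
    unfolding Dom_def using g'i g'p g'sq eta0 d0 g'_meas unfolding \<rho>'_def
    by auto
  have F1: "Ffun T \<mu> U \<gamma> \<alpha> \<rho>0 \<le> Ffun T \<mu> U g' (\<lambda>p. 0) \<rho>'"
    using assms(6) dom' by blast
  define X where "X = tint (\<lambda>p. eps p * \<gamma> p - T * sfn (\<gamma> p))"
  define X' where "X' = tint (\<lambda>p. eps p * g' p - T * sfn (g' p))"
  have XX: "X' \<le> X" unfolding X_def X'_def
  proof (rule tint_mono_AE[OF X_integrable[OF g'_meas g'i g'p] X_integrable[OF gm gi gp]])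
    show "AE p\<in>Tbox in lborel. eps p * g' p - T * sfn (g' p) \<le> eps p * \<gamma> p - T * sfn (\<gamma> p)"
      using gp
    proof eventually_elim
      case (elim p)
      show ?case
      proof
        assume "p \<in> Tbox"
        then have g0: "0 \<le> \<gamma> p" using elim by blast
        show "eps p * g' p - T * sfn (g' p) \<le> eps p * \<gamma> p - T * sfn (\<gamma> p)"
        proof (cases "eps p = 0")
          case True then show ?thesis by (simp add: g'_def)
        next
          case False
          then have "eps p > 0" using eps_nonneg[of p] by simp
          from key_pointwise[OF this T g0] False show ?thesis
            by (simp add: g'_def B_def)
        qed
      qed
    qed
  qed
  have SL: "Sent \<gamma> \<alpha> \<le> Sent \<gamma> (\<lambda>p. 0)" by (rule Sent_le[OF gm am gi gp ga])
  have D1: "tint (\<lambda>p. (eps p - \<mu>) * \<gamma> p) - T * Sent \<gamma> (\<lambda>p. 0) = X - \<mu> * N"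
    unfolding X_def N_def by (rule decomp[OF gm gi gp])
  have D2: "tint (\<lambda>p. (eps p - \<mu>) * g' p) - T * Sent g' (\<lambda>p. 0) = X' - \<mu> * N'"
    unfolding X'_def N'_def by (rule decomp[OF g'_meas g'i g'p])
  have Fold: "Ffun T \<mu> U \<gamma> \<alpha> \<rho>0 \<ge> X - \<mu> * N + U * N\<^sup>2"
  proof -
    have "Ffun T \<mu> U \<gamma> \<alpha> \<rho>0 = tint (\<lambda>p. (eps p - \<mu>) * \<gamma> p) - T * Sent \<gamma> \<alpha>
        + U / 2 * (tint \<alpha>)\<^sup>2 + U * N\<^sup>2"
      unfolding Ffun_def r0 N_def by simp
    moreover have "T * Sent \<gamma> \<alpha> \<le> T * Sent \<gamma> (\<lambda>p. 0)" using SL T by simp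
    moreover have "0 \<le> U / 2 * (tint \<alpha>)\<^sup>2" using U by simp
    ultimately show ?thesis using D1 by linarith
  qed
  have Fnew: "Ffun T \<mu> U g' (\<lambda>p. 0) \<rho>' = X' - \<mu> * N' - \<mu> * \<rho>' + U * N'\<^sup>2 + 2 * U * \<rho>' * N' + U / 2 * \<rho>'\<^sup>2"
    unfolding Ffun_def using D2 unfolding N'_def by (simp add: tint_zero)
  have "Ffun T \<mu> U g' (\<lambda>p. 0) \<rho>' - Ffun T \<mu> U \<gamma> \<alpha> \<rho>0
      \<le> (X' - X) + (- \<mu> * \<delta> + 2 * U * \<delta> * N' + U / 2 * (\<eta> + \<delta>)\<^sup>2 - U * \<eta>\<^sup>2)"
    using Fnew Fold unfolding \<rho>'_def \<eta>_def by (simp add: power2_eq_square algebra_simps)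
  also have "\<dots> \<le> - \<mu> * \<delta> + 2 * U * \<delta> * J + U / 2 * (\<eta> + \<delta>)\<^sup>2 - U * \<eta>\<^sup>2"
  proof -
    have "U * \<delta> * N' \<le> U * \<delta> * J" using N'J U d0 by (intro mult_left_mono) auto
    then show ?thesis using XX by linarith
  qed
  also have "\<dots> = - (U / 2) * (\<eta> - \<delta>)\<^sup>2 - U * \<delta>\<^sup>2"
    unfolding mu_eq by (simp add: power2_eq_square algebra_simps)
  also have "\<dots> < 0"
  proof -
    have "0 \<le> (U / 2) * (\<eta> - \<delta>)\<^sup>2" using U by simp
    moreover have "0 < U * \<delta>\<^sup>2" using U d0 by simp
    ultimately show ?thesis by linarith
  qed
  finally show False using F1 by linarith
qed

end
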